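(* Let $\mathcal{P}=\langle P,\le\rangle$ be a finite bounded poset with $|P|\ge 2$. Then there exists $n\in\mathbb{N}$ such that $(R^+)^n(\mathcal{P})$ is a chain.
   Context: A poset is bounded if it has a least and a greatest element. The height $H$ of a finite poset is the number of elements in its largest chain. For $a\in P$, $\uparrow a=\{b:b\ge a\}$, $\downarrow a=\{b:b\le a\}$ as subposets; the standard interval rank is $R^+(a)=[H(\uparrow a)-1,\;H(\mathcal{P})-H(\downarrow a)]$. Weak order: $[x_*,x^*]\le_W[y_*,y^*]$ iff $x_*\le y_*$ and $x^*\le y^*$. The interval rank poset $R^+(\mathcal{P})$ is the set $\{R^+(a):a\in P\}$ ordered by $\ge_W$ (it is again a finite bounded poset); $(R^+)^n$ denotes the $n$-fold iteration of this construction. *)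

theory Defs
  imports Main
begin

type_synonym 'a poset = "'a set \<times> ('a \<Rightarrow> 'a \<Rightarrow> bool)"

definition chain_on :: "'a set \<Rightarrow> ('a \<Rightarrow> 'a \<Rightarrow> bool) \<Rightarrow> bool" where
  "chain_on C le \<longleftrightarrow> (\<forall>x\<in>C. \<forall>y\<in>C. le x y \<or> le y x)"

definition is_chain :: "'a poset \<Rightarrow> bool" where
  "is_chain P \<longleftrightarrow> chain_on (fst P) (snd P)"

definition finite_bounded_poset :: "'a poset \<Rightarrow> bool" where
  "finite_bounded_poset P \<longleftrightarrow>
     (let S = fst P; le = snd P in
       finite S \<and>
       (\<forall>x\<in>S. le x x) \<and>
       (\<forall>x\<in>S. \<forall>y\<in>S. le x y \<longrightarrow> le y x \<longrightarrow> x = y) \<and>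
       (\<forall>x\<in>S. \<forall>y\<in>S. \<forall>z\<in>S. le x y \<longrightarrow> le y z \<longrightarrow> le x z) \<and>
       (\<exists>b\<in>S. \<exists>t\<in>S. \<forall>x\<in>S. le b x \<and> le x t))"

definition height :: "'a set \<Rightarrow> ('a \<Rightarrow> 'a \<Rightarrow> bool) \<Rightarrow> nat" where
  "height S le = Max (card ` {C. C \<subseteq> S \<and> chain_on C le})"

definition up_set :: "'a set \<Rightarrow> ('a \<Rightarrow> 'a \<Rightarrow> bool) \<Rightarrow> 'a \<Rightarrow> 'a set" where
  "up_set S le a = {b\<in>S. le a b}"

definition down_set :: "'a set \<Rightarrow> ('a \<Rightarrow> 'a \<Rightarrow> bool) \<Rightarrow> 'a \<Rightarrow> 'a set" where
  "down_set S le a = {b\<in>S. le b a}"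

text \<open>Standard interval rank R+(a) = [H(up a) - 1, H(P) - H(down a)], as a pair.\<close>
definition interval_rank :: "'a poset \<Rightarrow> 'a \<Rightarrow> nat \<times> nat" where
  "interval_rank P a =
     (height (up_set (fst P) (snd P) a) (snd P) - 1,
      height (fst P) (snd P) - height (down_set (fst P) (snd P) a) (snd P))"

definition weak_le :: "nat \<times> nat \<Rightarrow> nat \<times> nat \<Rightarrow> bool" where
  "weak_le x y \<longleftrightarrow> fst x \<le> fst y \<and> snd x \<le> snd y"

definition Rplus :: "'a poset \<Rightarrow> (nat \<times> nat) poset" where
  "Rplus P = (interval_rank P ` fst P, \<lambda>x y. weak_le y x)"

end

theory Submission
  imports Defs
begin

definition po :: "'a set \<Rightarrow> ('a \<Rightarrow> 'a \<Rightarrow> bool) \<Rightarrow> bool" where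
 "po S le \<longleftrightarrow> (\<forall>x\<in>S. le x x) \<and> (\<forall>x\<in>S. \<forall>y\<in>S. le x y \<longrightarrow> le y x \<longrightarrow> x = y)
    \<and> (\<forall>x\<in>S. \<forall>y\<in>S. \<forall>z\<in>S. le x y \<longrightarrow> le y z \<longrightarrow> le x z)"

definition comps :: "'a set \<Rightarrow> ('a \<Rightarrow> 'a \<Rightarrow> bool) \<Rightarrow> ('a \<times> 'a) set" where
 "comps S le = {(x,y). x\<in>S \<and> y\<in>S \<and> le x y \<and> x \<noteq> y}"

lemma po_refl: "po S le \<Longrightarrow> x \<in> S \<Longrightarrow> le x x" by (simp add: po_def)
lemma po_antisym: "po S le \<Longrightarrow> x \<in> S \<Longrightarrow> y \<in> S \<Longrightarrow> le x y \<Longrightarrow> le y x \<Longrightarrow> x = y"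
  unfolding po_def by blast
lemma po_trans: "po S le \<Longrightarrow> x \<in> S \<Longrightarrow> y \<in> S \<Longrightarrow> z \<in> S \<Longrightarrow> le x y \<Longrightarrow> le y z \<Longrightarrow> le x z"
  unfolding po_def by blast

lemma chains_finite: "finite S \<Longrightarrow> finite {C. C \<subseteq> S \<and> chain_on C le}"
  by (rule finite_subset[of _ "Pow S"]) auto

lemma height_ge: assumes "finite S" "C \<subseteq> S" "chain_on C le" shows "card C \<le> height S le"
  unfolding height_def using assms chains_finite[OF assms(1), of le] by (intro Max_ge) auto

lemma height_ex: assumes "finite S" shows "\<exists>C. C \<subseteq> S \<and> chain_on C le \<and> card C = height S le"
proof -
  have "{} \<in> {C. C \<subseteq> S \<and> chain_on C le}" by (simp add: chain_on_def)
  hence "height S le \<in> card ` {C. C \<subseteq> S \<and> chain_on C le}" unfolding height_def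
    using chains_finite[OF assms, of le] by (intro Max_in) auto
  thus ?thesis by auto
qed

lemma height_mono: assumes "finite S" "T \<subseteq> S" shows "height T le \<le> height S le"
proof -
  have "finite T" using assms(1) assms(2) by (rule finite_subset[rotated])
  then obtain C where "C \<subseteq> T" "chain_on C le" "card C = height T le" using height_ex by blast
  thus ?thesis using height_ge[OF assms(1), of C le] assms(2) by auto
qed

lemma chain_sub: "chain_on C le \<Longrightarrow> D \<subseteq> C \<Longrightarrow> chain_on D le" by (auto simp: chain_on_def)

lemma up_sub: "up_set S le a \<subseteq> S" by (auto simp: up_set_def)
lemma down_sub: "down_set S le a \<subseteq> S" by (auto simp: down_set_def)
lemma fin_up: "finite S \<Longrightarrow> finite (up_set S le a)" by (rule finite_subset[OF up_sub])
lemma fin_down: "finite S \<Longrightarrow> finite (down_set S le a)" by (rule finite_subset[OF down_sub])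

lemma height_pos: assumes "finite S" "po S le" "a \<in> S"
  shows "1 \<le> height (up_set S le a) le" "1 \<le> height (down_set S le a) le"
proof -
  have r: "le a a" using po_refl[OF assms(2,3)] .
  have c: "chain_on {a} le" using r by (auto simp: chain_on_def)
  have "{a} \<subseteq> up_set S le a" using r assms(3) by (auto simp: up_set_def)
  from height_ge[OF fin_up[OF assms(1)] this c]
  show "1 \<le> height (up_set S le a) le" by simp
  have "{a} \<subseteq> down_set S le a" using r assms(3) by (auto simp: down_set_def)
  from height_ge[OF fin_down[OF assms(1)] this c]
  show "1 \<le> height (down_set S le a) le" by simp
qed

lemma up_strict: assumes "finite S" "po S le" "a \<in> S" "b \<in> S" "le a b" "a \<noteq> b"
  shows "height (up_set S le b) le < height (up_set S le a) le"
proof -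
  have fu: "finite (up_set S le b)" using fin_up[OF assms(1)] .
  obtain C where C: "C \<subseteq> up_set S le b" "chain_on C le" "card C = height (up_set S le b) le"
    using height_ex[OF fu] by blast
  have fC: "finite C" using C(1) fu by (rule finite_subset)
  have Cs: "\<And>c. c \<in> C \<Longrightarrow> c \<in> S \<and> le b c" using C(1) by (auto simp: up_set_def)
  have ac: "\<And>c. c \<in> C \<Longrightarrow> le a c" using Cs po_trans[OF assms(2) assms(3) assms(4)] assms(5) by blast
  have sub: "insert a C \<subseteq> up_set S le a"
    using Cs ac assms(3) po_refl[OF assms(2,3)] by (auto simp: up_set_def)
  have ch: "chain_on (insert a C) le"
    using C(2) ac po_refl[OF assms(2,3)] unfolding chain_on_def by blast
  have na: "a \<notin> C"
  proof
    assume "a \<in> C" then have "le b a" using Cs by blast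
    then show False using po_antisym[OF assms(2,3,4,5)] assms(6) by blast
  qed
  have "card (insert a C) \<le> height (up_set S le a) le"
    using height_ge[OF fin_up[OF assms(1)] sub ch] .
  thus ?thesis using na fC C(3) by simp
qed

lemma down_strict: assumes "finite S" "po S le" "a \<in> S" "b \<in> S" "le a b" "a \<noteq> b"
  shows "height (down_set S le a) le < height (down_set S le b) le"
proof -
  have fu: "finite (down_set S le a)" using fin_down[OF assms(1)] .
  obtain C where C: "C \<subseteq> down_set S le a" "chain_on C le" "card C = height (down_set S le a) le"
    using height_ex[OF fu] by blast
  have fC: "finite C" using C(1) fu by (rule finite_subset)
  have Cs: "\<And>c. c \<in> C \<Longrightarrow> c \<in> S \<and> le c a" using C(1) by (auto simp: down_set_def)
  have ac: "\<And>c. c \<in> C \<Longrightarrow> le c b" using Cs po_trans[OF assms(2) _ assms(3) assms(4)] assms(5) by blast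
  have sub: "insert b C \<subseteq> down_set S le b"
    using Cs ac assms(4) po_refl[OF assms(2,4)] by (auto simp: down_set_def)
  have ch: "chain_on (insert b C) le"
    using C(2) ac po_refl[OF assms(2,4)] unfolding chain_on_def by blast
  have na: "b \<notin> C"
  proof
    assume "b \<in> C" then have "le b a" using Cs by blast
    then show False using po_antisym[OF assms(2,3,4,5)] assms(6) by blast
  qed
  have "card (insert b C) \<le> height (down_set S le b) le"
    using height_ge[OF fin_down[OF assms(1)] sub ch] .
  thus ?thesis using na fC C(3) by simp
qed

lemma sum_le: assumes "finite S" "po S le" "a \<in> S"
  shows "height (up_set S le a) le + height (down_set S le a) le \<le> height S le + 1"
proof -
  obtain A where A: "A \<subseteq> up_set S le a" "chain_on A le" "card A = height (up_set S le a) le"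
    using height_ex[OF fin_up[OF assms(1)]] by blast
  obtain B where B: "B \<subseteq> down_set S le a" "chain_on B le" "card B = height (down_set S le a) le"
    using height_ex[OF fin_down[OF assms(1)]] by blast
  have fA: "finite A" using A(1) fin_up[OF assms(1)] by (rule finite_subset)
  have fB: "finite B" using B(1) fin_down[OF assms(1)] by (rule finite_subset)
  have As: "\<And>x. x \<in> A \<Longrightarrow> x \<in> S \<and> le a x" using A(1) by (auto simp: up_set_def)
  have Bs: "\<And>x. x \<in> B \<Longrightarrow> x \<in> S \<and> le x a" using B(1) by (auto simp: down_set_def)
  have BA: "\<And>x y. x \<in> A \<Longrightarrow> y \<in> B \<Longrightarrow> le y x"
    using As Bs po_trans[OF assms(2) _ assms(3)] by blast
  have ch: "chain_on (A \<union> B) le"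
    using A(2) B(2) BA unfolding chain_on_def by blast
  have sub: "A \<union> B \<subseteq> S" using As Bs by blast
  have int: "A \<inter> B \<subseteq> {a}"
    using As Bs po_antisym[OF assms(2) assms(3)] by blast
  have "card (A \<inter> B) \<le> 1" using card_mono[OF _ int] by simp
  moreover have "card A + card B = card (A \<union> B) + card (A \<inter> B)"
    using card_Un_Int[OF fA fB] .
  moreover have "card (A \<union> B) \<le> height S le" using height_ge[OF assms(1) sub ch] .
  ultimately show ?thesis using A(3) B(3) by linarith
qed

lemma ir: "interval_rank (S,le) a = (height (up_set S le a) le - 1, height S le - height (down_set S le a) le)"
  by (simp add: interval_rank_def)

lemma rank_mono: assumes "finite S" "po S le" "a \<in> S" "b \<in> S" "le a b" "a \<noteq> b"
  shows "weak_le (interval_rank (S,le) b) (interval_rank (S,le) a)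
     \<and> interval_rank (S,le) a \<noteq> interval_rank (S,le) b"
proof -
  have 1: "height (up_set S le b) le < height (up_set S le a) le" using up_strict[OF assms] .
  have 2: "height (down_set S le a) le < height (down_set S le b) le" using down_strict[OF assms] .
  have 3: "1 \<le> height (up_set S le b) le" using height_pos[OF assms(1,2,4)] by simp
  have 4: "height (down_set S le b) le \<le> height S le" using height_mono[OF assms(1) down_sub] .
  show ?thesis unfolding ir weak_le_def using 1 2 3 4 by auto
qed


lemma rank_mono_le: assumes "finite S" "po S le" "a \<in> S" "b \<in> S" "le a b"
  shows "weak_le (interval_rank (S,le) b) (interval_rank (S,le) a)"
  using rank_mono[OF assms] assms by (cases "a = b") (auto simp: weak_le_def)

lemma rank_diag_le: assumes "finite S" "po S le" "a \<in> S"
  shows "fst (interval_rank (S,le) a) \<le> snd (interval_rank (S,le) a)"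
    "snd (interval_rank (S,le) a) < height S le"
  using sum_le[OF assms] height_pos[OF assms] unfolding ir by auto

lemma diag: assumes "finite S" "po S le" "k < height S le"
  shows "\<exists>c\<in>S. interval_rank (S,le) c = (k,k)"
proof -
  obtain C where C: "C \<subseteq> S" "chain_on C le" "card C = height S le"
    using height_ex[OF assms(1)] by blast
  have fC: "finite C" using C(1) assms(1) by (rule finite_subset)
  define u where "u c = height (up_set S le c) le" for c
  have eq: "interval_rank (S,le) c = (u c - 1, u c - 1)" if c: "c \<in> C" for c
  proof -
    have cS: "c \<in> S" using c C(1) by blast
    let ?A = "C \<inter> up_set S le c" and ?B = "C \<inter> down_set S le c"
    have un: "?A \<union> ?B = C" using C(1,2) c unfolding chain_on_def up_set_def down_set_def by blast
    have "?A \<inter> ?B \<subseteq> {c}" using C(1) po_antisym[OF assms(2) cS] unfolding up_set_def down_set_def by blast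
    moreover have "c \<in> ?A \<inter> ?B" using c cS po_refl[OF assms(2) cS] by (auto simp: up_set_def down_set_def)
    ultimately have int: "?A \<inter> ?B = {c}" by blast
    have "card ?A + card ?B = card C + 1"
      using card_Un_Int[of ?A ?B] fC un int by simp
    moreover have "card ?A \<le> u c" unfolding u_def
      by (rule height_ge[OF fin_up[OF assms(1)]]) (auto intro: chain_sub[OF C(2)])
    moreover have "card ?B \<le> height (down_set S le c) le"
      by (rule height_ge[OF fin_down[OF assms(1)]]) (auto intro: chain_sub[OF C(2)])
    moreover note sum_le[OF assms(1,2) cS]
    ultimately have "u c + height (down_set S le c) le = height S le + 1"
      using C(3) unfolding u_def by linarith
    thus ?thesis unfolding ir u_def by simp
  qed
  have inj: "inj_on u C"
  proof (rule inj_onI)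
    fix x y assume xy: "x \<in> C" "y \<in> C" "u x = u y"
    show "x = y"
    proof (rule ccontr)
      assume ne: "x \<noteq> y"
      have "le x y \<or> le y x" using C(2) xy unfolding chain_on_def by blast
      thus False using up_strict[OF assms(1,2), of x y] up_strict[OF assms(1,2), of y x]
        xy ne C(1) unfolding u_def by auto
    qed
  qed
  have img: "u ` C \<subseteq> {1..height S le}"
  proof
    fix v assume "v \<in> u ` C"
    then obtain c where c: "c \<in> C" "v = u c" by blast
    have "c \<in> S" using c C(1) by blast
    thus "v \<in> {1..height S le}" using height_pos[OF assms(1,2)] height_mono[OF assms(1) up_sub]
      c unfolding u_def by auto
  qed
  have "card (u ` C) = card {1..height S le}" using card_image[OF inj] C(3) by simp
  hence "u ` C = {1..height S le}" using card_subset_eq[OF _ img] by simp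
  hence "k + 1 \<in> u ` C" using assms(3) by simp
  then obtain c where "c \<in> C" "u c = k + 1" by force
  thus ?thesis using eq C(1) by force
qed


lemma iso_chain:
  assumes fin: "finite S" and po: "po S le"
    and inj: "inj_on (interval_rank (S,le)) S"
    and refl: "\<And>x y. x \<in> S \<Longrightarrow> y \<in> S \<Longrightarrow> weak_le (interval_rank (S,le) x) (interval_rank (S,le) y) \<Longrightarrow> le y x"
  shows "is_chain (Rplus (S,le))"
proof -
  define f where "f = interval_rank (S,le)"
  define leQ where "leQ = (\<lambda>x y. weak_le y x)"
  have dg: "fst (f a) = snd (f a)" if aS: "a \<in> S" for a
  proof (rule ccontr)
    assume ne: "fst (f a) \<noteq> snd (f a)"
    define l where "l = fst (f a)"
    define h where "h = snd (f a)"
    have lh: "l < h" using rank_diag_le(1)[OF fin po aS] ne unfolding l_def h_def f_def by simp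
    have hH: "h < height S le" using rank_diag_le(2)[OF fin po aS] unfolding h_def f_def by simp
    have fa: "f a = (l,h)" unfolding l_def h_def by simp
    define D where "D = (\<lambda>k. (k,k)) ` {0..l} \<union> {(l,h)}"
    have Dsub: "D \<subseteq> up_set (f ` S) leQ (f a)"
    proof
      fix q assume "q \<in> D"
      then consider k where "k \<le> l" "q = (k,k)" | "q = (l,h)" unfolding D_def by auto
      thus "q \<in> up_set (f ` S) leQ (f a)"
      proof cases
        case 1
        have "k < height S le" using 1 lh hH by simp
        then obtain c where "c \<in> S" "f c = (k,k)" using diag[OF fin po] unfolding f_def by blast
        hence "q \<in> f ` S" using 1 by force
        thus ?thesis using 1 lh fa unfolding up_set_def leQ_def weak_le_def by auto
      next
        case 2
        have "q \<in> f ` S" using 2 aS fa by (metis image_eqI)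
        thus ?thesis using 2 fa unfolding up_set_def leQ_def weak_le_def by auto
      qed
    qed
    have Dch: "chain_on D leQ" unfolding D_def chain_on_def leQ_def weak_le_def using lh by auto
    have "card D = l + 2"
    proof -
      have "(l,h) \<notin> (\<lambda>k. (k,k)) ` {0..l}" using lh by auto
      moreover have "card ((\<lambda>k. (k,k)) ` {0..l}) = l + 1"
        by (subst card_image) (auto simp: inj_on_def)
      ultimately show ?thesis unfolding D_def by simp
    qed
    have finQ: "finite (f ` S)" using fin by simp
    have big: "l + 2 \<le> height (up_set (f ` S) leQ (f a)) leQ"
      using height_ge[OF fin_up[OF finQ] Dsub Dch] \<open>card D = l + 2\<close> by simp
    obtain C' where C': "C' \<subseteq> up_set (f ` S) leQ (f a)" "chain_on C' leQ"
      "card C' = height (up_set (f ` S) leQ (f a)) leQ"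
      using height_ex[OF fin_up[OF finQ]] by blast
    define C where "C = {x \<in> S. f x \<in> C'}"
    have sub': "C' \<subseteq> f ` S" using C'(1) up_sub[of "f ` S" leQ "f a"] by (rule subset_trans)
    have img: "f ` C = C'"
    proof
      show "f ` C \<subseteq> C'" by (auto simp: C_def)
      show "C' \<subseteq> f ` C"
      proof
        fix y assume y: "y \<in> C'"
        then obtain x where "x \<in> S" "y = f x" using sub' by auto
        thus "y \<in> f ` C" using y unfolding C_def by auto
      qed
    qed
    have "inj_on f C" using inj unfolding f_def C_def by (rule inj_on_subset) auto
    hence cc: "card C = card C'" using card_image[of f C] img by simp
    have Csub: "C \<subseteq> up_set S le a"
    proof
      fix x assume x: "x \<in> C"
      hence "weak_le (f x) (f a)" using C'(1) unfolding C_def up_set_def leQ_def by auto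
      thus "x \<in> up_set S le a" using refl[of x a] x aS unfolding C_def up_set_def f_def by auto
    qed
    have Cch: "chain_on C le" unfolding chain_on_def
    proof (intro ballI)
      fix x y assume xy: "x \<in> C" "y \<in> C"
      hence "weak_le (f y) (f x) \<or> weak_le (f x) (f y)" using C'(2) unfolding C_def chain_on_def leQ_def by auto
      thus "le x y \<or> le y x" using refl[of x y] refl[of y x] xy unfolding C_def f_def by auto
    qed
    have "card C \<le> height (up_set S le a) le" using height_ge[OF fin_up[OF fin] Csub Cch] .
    moreover have "height (up_set S le a) le = l + 1"
      using height_pos(1)[OF fin po aS] unfolding l_def f_def ir by simp
    ultimately show False using big cc C'(3) by simp
  qed
  show ?thesis unfolding is_chain_def Rplus_def chain_on_def
  proof (simp, intro ballI)
    fix x y assume "x \<in> S" "y \<in> S"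
    thus "weak_le (interval_rank (S, le) y) (interval_rank (S, le) x) \<or>
          weak_le (interval_rank (S, le) x) (interval_rank (S, le) y)"
      using dg[of x] dg[of y] unfolding f_def weak_le_def by auto
  qed
qed


lemma comps_fin: "finite S \<Longrightarrow> finite (comps S le)"
  by (rule finite_subset[of _ "S \<times> S"]) (auto simp: comps_def)

lemma comps_card: "finite S \<Longrightarrow> card (comps S le) \<le> card S * card S"
proof -
  assume f: "finite S"
  have "comps S le \<subseteq> S \<times> S" by (auto simp: comps_def)
  from card_mono[OF _ this] f show ?thesis by (simp add: card_cartesian_product)
qed

lemma step:
  assumes fin: "finite S" and po: "po S le" and nc: "\<not> is_chain (Rplus (S,le))"
  shows "card (fst (Rplus (S,le))) < card S \<or>
    (card (fst (Rplus (S,le))) = card S \<and>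
     card (comps S le) < card (comps (fst (Rplus (S,le))) (snd (Rplus (S,le)))))"
proof -
  define f where "f = interval_rank (S,le)"
  define leQ where "leQ = (\<lambda>x y. weak_le y x)"
  have Q: "fst (Rplus (S,le)) = f ` S" "snd (Rplus (S,le)) = leQ"
    unfolding Rplus_def f_def leQ_def by auto
  have le: "card (f ` S) \<le> card S" by (rule card_image_le[OF fin])
  show ?thesis
  proof (cases "card (f ` S) < card S")
    case True thus ?thesis using Q by simp
  next
    case False
    hence eqc: "card (f ` S) = card S" using le by simp
    have inj: "inj_on f S" using eq_card_imp_inj_on[OF fin eqc] .
    define g where "g = (\<lambda>(x,y). (f x, f y))"
    have gmap: "g ` comps S le \<subseteq> comps (f ` S) leQ"
    proof
      fix p assume "p \<in> g ` comps S le"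
      then obtain x y where xy: "x \<in> S" "y \<in> S" "le x y" "x \<noteq> y" "p = (f x, f y)"
        unfolding g_def comps_def by auto
      have "weak_le (f y) (f x) \<and> f x \<noteq> f y" using rank_mono[OF fin po xy(1-4)] unfolding f_def .
      thus "p \<in> comps (f ` S) leQ" using xy unfolding comps_def leQ_def by auto
    qed
    have ginj: "inj_on g (comps S le)"
      using inj unfolding inj_on_def g_def comps_def by auto
    have finC: "finite (comps (f ` S) leQ)" using comps_fin fin by blast
    have cle: "card (comps S le) \<le> card (comps (f ` S) leQ)"
      using card_inj_on_le[OF ginj gmap finC] .
    show ?thesis
    proof (cases "card (comps S le) < card (comps (f ` S) leQ)")
      case True thus ?thesis using Q eqc by simp
    next
      case False
      hence "card (g ` comps S le) = card (comps (f ` S) leQ)"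
        using cle card_image[OF ginj] by simp
      hence gim: "g ` comps S le = comps (f ` S) leQ" using card_subset_eq[OF finC gmap] by simp
      have refl: "le y x" if xy: "x \<in> S" "y \<in> S" "weak_le (f x) (f y)" for x y
      proof (cases "f x = f y")
        case True
        hence "x = y" using inj xy unfolding inj_on_def by blast
        thus ?thesis using po_refl[OF po xy(1)] by simp
      next
        case False
        hence "(f y, f x) \<in> comps (f ` S) leQ" using xy unfolding comps_def leQ_def by auto
        then obtain x' y' where p: "(x',y') \<in> comps S le" "(f y, f x) = g (x',y')"
          using gim by (metis imageE prod.collapse)
        hence "f x' = f y" "f y' = f x" "x' \<in> S" "y' \<in> S" "le x' y'" unfolding g_def comps_def by auto
        hence "x' = y" "y' = x" "le x' y'" using inj xy unfolding inj_on_def by auto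
        thus ?thesis by simp
      qed
      have "is_chain (Rplus (S,le))"
        by (rule iso_chain[OF fin po]) (use inj refl in \<open>auto simp: f_def\<close>)
      thus ?thesis using nc by simp
    qed
  qed
qed

lemma po_weak: "po S (\<lambda>x y. weak_le y x)"
  unfolding po_def weak_le_def by auto

lemma main:
  fixes Q :: "(nat \<times> nat) poset"
  shows "finite (fst Q) \<Longrightarrow> snd Q = (\<lambda>x y. weak_le y x) \<Longrightarrow> \<exists>m. is_chain ((Rplus ^^ m) Q)"
proof (induction Q rule: wf_induct_rule[OF wf_measures[of
    "[\<lambda>Q. card (fst Q), \<lambda>Q. card (fst Q) * card (fst Q) - card (comps (fst Q) (snd Q))]"]])
  case (1 Q)
  obtain S le where Qd: "Q = (S, le)" by (cases Q)
  have fin: "finite S" and lee: "le = (\<lambda>x y. weak_le y x)" using 1(2,3) Qd by auto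
  have po: "po S le" using po_weak lee by simp
  show ?case
  proof (cases "is_chain Q")
    case True
    hence "is_chain ((Rplus ^^ 0) Q)" by simp
    thus ?thesis by blast
  next
    case False
    show ?thesis
    proof (cases "is_chain (Rplus Q)")
      case True
      hence "is_chain ((Rplus ^^ 1) Q)" by simp
      thus ?thesis by blast
    next
      case nc: False
      have st: "card (fst (Rplus Q)) < card S \<or>
        (card (fst (Rplus Q)) = card S \<and> card (comps S le) < card (comps (fst (Rplus Q)) (snd (Rplus Q))))"
        using step[OF fin po] nc Qd by simp
      have fin': "finite (fst (Rplus Q))" using fin Qd by (simp add: Rplus_def)
      have snd': "snd (Rplus Q) = (\<lambda>x y. weak_le y x)" by (simp add: Rplus_def)
      have b': "card (comps (fst (Rplus Q)) (snd (Rplus Q))) \<le> card (fst (Rplus Q)) * card (fst (Rplus Q))"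
        using comps_card[OF fin'] .
      have "(Rplus Q, Q) \<in> measures
          [\<lambda>Q. card (fst Q), \<lambda>Q. card (fst Q) * card (fst Q) - card (comps (fst Q) (snd Q))]"
        using st b' Qd by auto
      from 1(1)[OF this fin' snd'] obtain m where "is_chain ((Rplus ^^ m) (Rplus Q))" by blast
      hence "is_chain ((Rplus ^^ Suc m) Q)" by (simp add: funpow_Suc_right del: funpow.simps)
      thus ?thesis by blast
    qed
  qed
qed

theorem proposition9:
  fixes P :: "'a poset"
  assumes "finite_bounded_poset P"
    and "card (fst P) \<ge> 2"
  shows "is_chain P \<or> (\<exists>m. is_chain ((Rplus ^^ m) (Rplus P)))"
proof -
  have "finite (fst P)" using assms(1) unfolding finite_bounded_poset_def Let_def by blast
  hence "finite (fst (Rplus P))" by (simp add: Rplus_def)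
  moreover have "snd (Rplus P) = (\<lambda>x y. weak_le y x)" by (simp add: Rplus_def)
  ultimately show ?thesis using main by blast
qed

end
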